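(* Let $(T,\mathcal{F},\mu)$ be a non-atomic measure space with $0<\mu(T)<+\infty$, $E$ a real Banach space, and $f,g:E\to\mathbb{R}$ two functions, with $f$ lower semicontinuous and $g$ continuous, satisfying $$\sup_E f<+\infty,\quad \inf_E g=-\infty,\quad \sup_E g=+\infty$$ and $$\max\left\{\sup_{x\in E}\frac{|f(x)|}{1+\|x\|^p},\ \sup_{x\in E}\frac{|g(x)|}{1+\|x\|^p}\right\}<+\infty$$ for some $p\geq 1$. Assume that $f$ has at most one global minimum and that no zero of $g$ is a global minimum of $f$. For each $u\in L^p(T,E)$ set $$J(u)=\int_T f(u(t))\,d\mu+\left(\int_T g(u(t))\,d\mu\right)^2.$$ Then the restriction of $J$ to any decomposable subset of $L^p(T,E)$ containing the constant functions has no global minima.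
   Context: $L^p(T,E)$ denotes the space of all (equivalence classes of) strongly $\mu$-measurable functions $u:T\to E$ with $\int_T\|u(t)\|^p\,d\mu<+\infty$, normed by $\|u\|=(\int_T\|u(t)\|^p d\mu)^{1/p}$. A set $D\subseteq L^p(T,E)$ is decomposable if for every $u,v\in D$ and every $A\in\mathcal{F}$ the function $t\mapsto \chi_A(t)u(t)+(1-\chi_A(t))v(t)$ belongs to $D$, where $\chi_A$ is the characteristic function of $A$. *)

theory Defs
  imports "HOL-Analysis.Analysis"
begin

definition lower_semicontinuous :: "('a::topological_space \<Rightarrow> real) \<Rightarrow> bool" where
  "lower_semicontinuous f \<longleftrightarrow> (\<forall>a. open {x. a < f x})"

definition non_atomic :: "'t measure \<Rightarrow> bool" where
  "non_atomic M \<longleftrightarrow> (\<forall>A\<in>sets M. 0 < emeasure M A \<longrightarrow>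
      (\<exists>B\<in>sets M. B \<subseteq> A \<and> 0 < emeasure M B \<and> emeasure M B < emeasure M A))"

definition strongly_measurable :: "'t measure \<Rightarrow> ('t \<Rightarrow> 'e::real_normed_vector) \<Rightarrow> bool" where
  "strongly_measurable M u \<longleftrightarrow> (\<exists>s. (\<forall>n. simple_function M (s n)) \<and>
      (\<forall>t\<in>space M. (\<lambda>n. s n t) \<longlonglongrightarrow> u t))"

(* representatives of elements of L^p(T,E) *)
definition Lp_space :: "'t measure \<Rightarrow> real \<Rightarrow> ('t \<Rightarrow> 'e::real_normed_vector) set" where
  "Lp_space M p = {u. strongly_measurable M u \<and>
      (\<integral>\<^sup>+ t. ennreal (norm (u t) powr p) \<partial>M) < \<infinity>}"

definition decomposable :: "'t measure \<Rightarrow> ('t \<Rightarrow> 'e) set \<Rightarrow> bool" where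
  "decomposable M D \<longleftrightarrow> (\<forall>u\<in>D. \<forall>v\<in>D. \<forall>A\<in>sets M.
      (\<lambda>t. if t \<in> A then u t else v t) \<in> D)"

definition J_functional :: "'t measure \<Rightarrow> ('e \<Rightarrow> real) \<Rightarrow> ('e \<Rightarrow> real) \<Rightarrow> ('t \<Rightarrow> 'e) \<Rightarrow> real" where
  "J_functional M f g u = (\<integral>t. f (u t) \<partial>M) + (\<integral>t. g (u t) \<partial>M)\<^sup>2"

end

theory Submission
  imports Defs
begin

lemma small_set:
  assumes na: "non_atomic M" and fin: "emeasure M (space M) < \<infinity>"
    and pos: "0 < emeasure M (space M)" and eta: "0 < \<eta>"
  shows "\<exists>A\<in>sets M. 0 < measure M A \<and> measure M A < \<eta> \<and> measure M A < measure M (space M)"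
proof -
  interpret finite_measure M by (rule finite_measureI) (use fin in auto)
  have half: "\<exists>B\<in>sets M. 0 < measure M B \<and> 2 * measure M B \<le> measure M A"
    if A: "A \<in> sets M" "0 < measure M A" for A
  proof -
    have "0 < emeasure M A" using A emeasure_eq_measure by auto
    then obtain B where B: "B \<in> sets M" "B \<subseteq> A" "0 < emeasure M B" "emeasure M B < emeasure M A"
      using na A unfolding non_atomic_def by blast
    have B': "0 < measure M B" "measure M B < measure M A"
      using B by (auto simp: emeasure_eq_measure ennreal_less_iff)
    have D: "measure M (A - B) = measure M A - measure M B"
      using A B by (simp add: finite_measure_Diff)
    show ?thesis
    proof (cases "2 * measure M B \<le> measure M A")
      case True then show ?thesis using B B' by blast
    next
      case False
      have "A - B \<in> sets M" using A B by auto
      moreover have "0 < measure M (A - B) \<and> 2 * measure M (A - B) \<le> measure M A"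
        unfolding D using False B' by (simp add: algebra_simps)
      ultimately show ?thesis by blast
    qed
  qed
  define m where "m = measure M (space M)"
  have m: "0 < m" using pos unfolding m_def by (simp add: emeasure_eq_measure)
  have ind: "\<exists>A\<in>sets M. 0 < measure M A \<and> measure M A * 2^n \<le> m" for n
  proof (induction n)
    case 0 then show ?case using m unfolding m_def by (intro bexI[of _ "space M"]) auto
  next
    case (Suc n)
    then obtain A where A: "A\<in>sets M" "0 < measure M A" "measure M A * 2^n \<le> m" by blast
    then obtain B where B: "B\<in>sets M" "0 < measure M B" "2 * measure M B \<le> measure M A"
      using half by blast
    have "measure M B * 2 ^ Suc n = (2 * measure M B) * 2^n" by simp
    also have "\<dots> \<le> measure M A * 2^n" using B by (intro mult_right_mono) auto
    finally have "measure M B * 2 ^ Suc n \<le> m" using A(3) by linarith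
    then show ?case using B by blast
  qed
  obtain n where n: "m / \<eta> < 2 ^ n" using real_arch_pow[of 2 "m/\<eta>"] by auto
  obtain A where A: "A\<in>sets M" "0 < measure M A" "measure M A * 2^(Suc n) \<le> m" using ind by blast
  have "m < \<eta> * 2^n" using n eta by (simp add: field_simps)
  moreover have "measure M A * 2^n * 2 \<le> m" using A by (simp add: mult.commute mult.left_commute)
  ultimately have 1: "measure M A * 2^n < \<eta> * 2^n" "measure M A * 2 \<le> m" using A m
    apply linarith
    by (smt (verit) A(2) \<open>measure M A * 2 ^ n * 2 \<le> m\<close> mult_le_cancel_left1 mult_nonneg_nonneg one_le_power zero_le_numeral)
  have "measure M A < \<eta>" using 1(1) by simp
  then show ?thesis using A 1 m unfolding m_def by auto
qed

lemma step_int: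
  fixes h :: "'e \<Rightarrow> real"
  assumes "finite_measure M" "A \<in> sets M"
  shows "(\<integral>t. h (if t\<in>A then y else x) \<partial>M) = measure M (space M) * h x + measure M A * (h y - h x)"
proof -
  interpret finite_measure M by fact
  have e: "h (if t\<in>A then y else x) = h x + (h y - h x) * indicator A t" for t
    by (cases "t \<in> A") (simp_all add: indicator_def)
  have "emeasure M A < \<infinity>" using emeasure_finite[of A] by (simp add: less_top[symmetric])
  then have i2: "integrable M (\<lambda>t. (h y - h x) * indicator A t)" using assms(2) by simp
  have 1: "(\<integral>t. h x + (h y - h x) * indicator A t \<partial>M) = (\<integral>t. h x \<partial>M) + (\<integral>t. (h y - h x) * indicator A t \<partial>M)"
    by (rule Bochner_Integration.integral_add[OF integrable_const i2])
  have "A \<inter> space M = A" using assms(2) sets.sets_into_space by blast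
  then have 2: "(\<integral>t. indicator A t \<partial>M) = measure M A" using Bochner_Integration.integral_indicator[of M A] by simp
  show ?thesis unfolding e 1 integral_mult_right_zero 2 lebesgue_integral_const
    by (simp add: algebra_simps)
qed

lemma g_surj:
  fixes g :: "'e::real_normed_vector \<Rightarrow> real"
  assumes "continuous_on UNIV g" "\<not> bdd_below (range g)" "\<not> bdd_above (range g)"
  shows "\<exists>y. g y = c"
proof -
  obtain a where a: "g a \<le> c" using assms(2) unfolding bdd_below_def by (auto simp: not_le)
     (metis less_le_not_le nle_le)
  obtain b where b: "c \<le> g b" using assms(3) unfolding bdd_above_def by (auto simp: not_le)
     (metis less_le_not_le nle_le)
  have "connected (g ` UNIV)" by (rule connected_continuous_image[OF assms(1)]) (simp add: connected_UNIV)
  then have "c \<in> g ` UNIV" by (rule connectedD_interval[of _ "g a" "g b"]) (use a b in auto)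
  then show ?thesis by auto
qed

lemma sm_meas:
  assumes "strongly_measurable M u"
  shows "u \<in> borel_measurable M"
proof -
  obtain s where s: "\<And>n. simple_function M (s n)" "\<And>t. t\<in>space M \<Longrightarrow> (\<lambda>n. s n t) \<longlonglongrightarrow> u t"
    using assms unfolding strongly_measurable_def by blast
  show ?thesis
    by (rule borel_measurable_LIMSEQ_metric[OF borel_measurable_simple_function[OF s(1)] s(2)])
qed

lemma lsc_meas:
  assumes "lower_semicontinuous f"
  shows "f \<in> borel_measurable borel"
  unfolding borel_measurable_iff_greater
  using assms unfolding lower_semicontinuous_def by auto

theorem theorem1p5:
  fixes M :: "'t measure" and f g :: "'e::banach \<Rightarrow> real" and p :: real
  assumes nonatomic: "non_atomic M"
    and pos: "0 < emeasure M (space M)" and fin: "emeasure M (space M) < \<infinity>"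
    and lsc: "lower_semicontinuous f" and contg: "continuous_on UNIV g"
    and sup_f: "bdd_above (range f)"
    and inf_g: "\<not> bdd_below (range g)" and sup_g: "\<not> bdd_above (range g)"
    and p: "p \<ge> 1"
    and growth: "\<exists>C. \<forall>x. \<bar>f x\<bar> \<le> C * (1 + norm x powr p) \<and> \<bar>g x\<bar> \<le> C * (1 + norm x powr p)"
    and unique_min: "\<forall>x y. (\<forall>z. f x \<le> f z) \<and> (\<forall>z. f y \<le> f z) \<longrightarrow> x = y"
    and zeros: "\<forall>x. g x = 0 \<longrightarrow> \<not> (\<forall>z. f x \<le> f z)"
  shows "\<forall>D. D \<subseteq> Lp_space M p \<and> decomposable M D \<and> (\<forall>x. (\<lambda>t. x) \<in> D) \<longrightarrow>
           \<not> (\<exists>u\<in>D. \<forall>v\<in>D. J_functional M f g u \<le> J_functional M f g v)"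
proof (intro allI impI notI)
  fix D :: "('t \<Rightarrow> 'e) set"
  assume HD: "D \<subseteq> Lp_space M p \<and> decomposable M D \<and> (\<forall>x. (\<lambda>t. x) \<in> D)"
  assume "\<exists>u\<in>D. \<forall>v\<in>D. J_functional M f g u \<le> J_functional M f g v"
  then obtain u where uD: "u \<in> D" and umin: "\<And>v. v\<in>D \<Longrightarrow> J_functional M f g u \<le> J_functional M f g v"
    by blast
  have fmM: "finite_measure M" by (rule finite_measureI) (use fin in auto)
  interpret finite_measure M by (rule fmM)
  define m where "m = measure M (space M)"
  have m: "0 < m" using pos unfolding m_def by (simp add: emeasure_eq_measure)
  define S where "S = Sup (range f)"
  have fS: "f z \<le> S" for z unfolding S_def using sup_f by (intro cSup_upper) auto
  define Ju where "Ju = J_functional M f g u"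
  have key: False if A: "A \<in> sets M" "0 < measure M A" "measure M A < m"
     and x: "(m - measure M A) * f x + measure M A * S < Ju" for A x
  proof -
    define \<delta> where "\<delta> = measure M A"
    obtain y where y: "g y = - (m - \<delta>) * g x / \<delta>" using g_surj[OF contg inf_g sup_g] by blast
    define v where "v = (\<lambda>t. if t \<in> A then y else x)"
    have dec: "decomposable M D" and cD: "\<And>z. (\<lambda>t. z) \<in> D" using HD by auto
    have vD: "v \<in> D" unfolding v_def
      using dec[unfolded decomposable_def, rule_format, OF cD[of y] cD[of x] A(1)] .
    have If: "(\<integral>t. f (v t) \<partial>M) = m * f x + \<delta> * (f y - f x)"
      unfolding v_def m_def \<delta>_def by (rule step_int[OF fmM A(1)])
    have Ig: "(\<integral>t. g (v t) \<partial>M) = m * g x + \<delta> * (g y - g x)"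
      unfolding v_def m_def \<delta>_def by (rule step_int[OF fmM A(1)])
    have "\<delta> * g y = - (m - \<delta>) * g x" using A unfolding y \<delta>_def by simp
    then have Ig0: "(\<integral>t. g (v t) \<partial>M) = 0" unfolding Ig by (simp add: algebra_simps)
    have "J_functional M f g v = m * f x + \<delta> * (f y - f x)"
      unfolding J_functional_def If Ig0 by simp
    also have "\<dots> = (m - \<delta>) * f x + \<delta> * f y" by (simp add: algebra_simps)
    also have "\<dots> \<le> (m - \<delta>) * f x + \<delta> * S" using fS[of y] A unfolding \<delta>_def
      by (simp add: mult_left_mono)
    also have "\<dots> < Ju" using x unfolding \<delta>_def .
    finally show False using umin[OF vD] unfolding Ju_def by simp
  qed
  show False
  proof (cases "bdd_below (range f)")
    case False
    obtain A where A: "A\<in>sets M" "0 < measure M A" "measure M A < m"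
      using small_set[OF nonatomic fin pos m] unfolding m_def by auto
    define \<delta> where "\<delta> = measure M A"
    obtain x where x: "f x < (Ju - \<delta> * S) / (m - \<delta>)"
      using False unfolding bdd_below_def by (auto simp: not_le)
    have "(m - \<delta>) * f x < Ju - \<delta> * S" using x A unfolding \<delta>_def by (simp add: field_simps)
    then show False using key[OF A, of x] unfolding \<delta>_def by linarith
  next
    case True
    define L where "L = Inf (range f)"
    have fL: "L \<le> f z" for z unfolding L_def using True by (intro cInf_lower) auto
    obtain C where C: "\<And>x. \<bar>f x\<bar> \<le> C * (1 + norm x powr p)" "\<And>x. \<bar>g x\<bar> \<le> C * (1 + norm x powr p)"
      using growth by blast
    have uLp: "u \<in> Lp_space M p" using HD uD by auto
    have um[measurable]: "u \<in> borel_measurable M" using uLp sm_meas unfolding Lp_space_def by auto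
    have fm[measurable]: "f \<in> borel_measurable borel" by (rule lsc_meas[OF lsc])
    have gm[measurable]: "g \<in> borel_measurable borel" using contg
      by (simp add: borel_measurable_continuous_onI)
    have nm: "(\<lambda>t. norm (u t) powr p) \<in> borel_measurable M" by measurable
    have ni: "integrable M (\<lambda>t. norm (u t) powr p)"
      by (rule integrableI_bounded[OF nm]) (use uLp in \<open>auto simp: Lp_space_def\<close>)
    have bi: "integrable M (\<lambda>t. C * (1 + norm (u t) powr p))"
      using ni by auto
    have fui: "integrable M (\<lambda>t. f (u t))"
      by (rule Bochner_Integration.integrable_bound[OF bi]) (simp, intro AE_I2, metis C(1) abs_ge_self order_trans real_norm_def)
    have gui: "integrable M (\<lambda>t. g (u t))"
      by (rule Bochner_Integration.integrable_bound[OF bi]) (simp, intro AE_I2, metis C(2) abs_ge_self order_trans real_norm_def)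
    have Jf: "Ju = (\<integral>t. f (u t) \<partial>M) + (\<integral>t. g (u t) \<partial>M)\<^sup>2"
      unfolding Ju_def J_functional_def ..
    have lowf: "m * L \<le> (\<integral>t. f (u t) \<partial>M)"
    proof -
      have "(\<integral>t. L \<partial>M) \<le> (\<integral>t. f (u t) \<partial>M)" by (rule Bochner_Integration.integral_mono) (use fui fL in auto)
      then show ?thesis unfolding m_def by simp
    qed
    show False
    proof (cases "Ju \<le> m * L")
      case True
      have sq: "0 \<le> (\<integral>t. g (u t) \<partial>M)\<^sup>2" by simp
      have eqf: "(\<integral>t. f (u t) \<partial>M) = m * L" using True lowf sq Jf by linarith
      have "(\<integral>t. g (u t) \<partial>M)\<^sup>2 \<le> 0" using True lowf Jf by linarith
      then have eqg: "(\<integral>t. g (u t) \<partial>M) = 0" by simp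
      have "(\<integral>t. f (u t) - L \<partial>M) = 0" using eqf fui unfolding m_def by simp
      then have ae: "AE t in M. f (u t) - L = 0"
        using integral_nonneg_eq_0_iff_AE[of M "\<lambda>t. f (u t) - L"] fui fL by auto
      have "\<exists>t\<in>space M. f (u t) = L"
      proof (rule ccontr)
        assume "\<not> ?thesis"
        then have nt: "\<And>t. t \<in> space M \<Longrightarrow> f (u t) \<noteq> L" by blast
        have "AE t in M. False" using ae AE_space by eventually_elim (use nt in simp)
        then have "ae_filter M = bot" by (simp add: trivial_limit_def)
        then show False using pos ae_filter_eq_bot_iff[of M] by simp
      qed
      then obtain t0 where t0: "t0 \<in> space M" "f (u t0) = L" by blast
      define x0 where "x0 = u t0"
      have x0min: "\<forall>z. f x0 \<le> f z" using t0 fL unfolding x0_def by auto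
      have "AE t in M. u t = x0"
        using ae
      proof eventually_elim
        case (elim t)
        then have "\<forall>z. f (u t) \<le> f z" using fL by simp
        then show ?case using unique_min x0min by blast
      qed
      then have "AE t in M. g (u t) = g x0" by eventually_elim simp
      then have "(\<integral>t. g (u t) \<partial>M) = (\<integral>t. g x0 \<partial>M)" by (intro integral_cong_AE) auto
      then have "m * g x0 = 0" using eqg unfolding m_def by simp
      then have "g x0 = 0" using m by simp
      then show False using zeros x0min by blast
    next
      case False
      define e where "e = Ju - m * L"
      have e: "0 < e" using False unfolding e_def by simp
      have SL: "L \<le> S" using fL[of 0] fS[of 0] by simp
      obtain A where A: "A\<in>sets M" "0 < measure M A" "measure M A < min m (e / (2 * (S - L + 1)))"
        using small_set[OF nonatomic fin pos, of "min m (e / (2 * (S - L + 1)))"] e SL m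
        unfolding m_def by auto
      define \<delta> where "\<delta> = measure M A"
      have d1: "\<delta> < m" "0 < \<delta>" using A unfolding \<delta>_def by auto
      have "\<delta> * (2 * (S - L + 1)) < e" using A SL unfolding \<delta>_def by (simp add: field_simps)
      then have d2: "\<delta> * (S - L) < e / 2" using d1 SL by (simp add: algebra_simps) 
      have "\<exists>x. f x < L + e / (2 * m)"
      proof (rule ccontr)
        assume "\<not> ?thesis"
        then have "L + e / (2 * m) \<le> L" unfolding L_def
          by (intro cInf_greatest) (auto simp: not_less)
        then show False using e m by (simp add: field_simps)
      qed
      then obtain x where x: "f x < L + e / (2 * m)" by blast
      have "m * (f x - L) < e / 2" using x m by (simp add: field_simps)
      moreover have "(m - \<delta>) * (f x - L) \<le> m * (f x - L)"
        using d1 fL[of x] by (simp add: mult_right_mono)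
      ultimately have "(m - \<delta>) * (f x - L) < e / 2" by linarith
      then have "(m - \<delta>) * f x + \<delta> * S < Ju"
        using d2 unfolding e_def by (simp add: algebra_simps)
      then show False using key[OF A(1,2), of x] d1 unfolding \<delta>_def by linarith
    qed
  qed
qed

end
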